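(* Let $K$ be a field of characteristic $p>0$, $s\geq1$ an integer, $n=1+p^s$, let $X$ be the $n\times n$ matrix with $1$'s in positions $(i,i+1)$, $1\leq i\leq n-1$, and $0$ elsewhere, and let $K[X]$ be the $K$-subalgebra of $\mathrm{Mat}_n(K)$ generated by $X$. Then every $K$-algebra automorphism $\varphi$ of $K[X]$ is induced by conjugation with some upper triangular matrix $A\in\mathrm{GL}_n(K)$, i.e. $\varphi(Y)=AYA^{-1}$ for all $Y\in K[X]$. For a given $\varphi$ there is a unique such $A$ whose last column has only zero entries except for a $1$ in position $(n,n)$. Any other matrix inducing $\varphi$ has the form $AC$ for some unit $C$ of $K[X]$. *)

theory Defs
  imports "Jordan_Normal_Form.Matrix"
begin

definition shift_mat :: "nat \<Rightarrow> 'a::field mat" where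
  "shift_mat n = mat n n (\<lambda>(i,j). if j = i + 1 then 1 else 0)"

inductive_set KX :: "nat \<Rightarrow> 'a::field mat set" for n :: nat where
  gen: "shift_mat n \<in> KX n"
| one: "1\<^sub>m n \<in> KX n"
| add: "Y \<in> KX n \<Longrightarrow> Z \<in> KX n \<Longrightarrow> Y + Z \<in> KX n"
| smult: "Y \<in> KX n \<Longrightarrow> c \<cdot>\<^sub>m Y \<in> KX n"
| mult: "Y \<in> KX n \<Longrightarrow> Z \<in> KX n \<Longrightarrow> Y * Z \<in> KX n"

definition KX_automorphism :: "nat \<Rightarrow> ('a::field mat \<Rightarrow> 'a mat) \<Rightarrow> bool" where
  "KX_automorphism n \<phi> \<longleftrightarrow>
     bij_betw \<phi> (KX n) (KX n) \<and>
     (\<forall>Y\<in>KX n. \<forall>Z\<in>KX n. \<phi> (Y + Z) = \<phi> Y + \<phi> Z) \<and>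
     (\<forall>c. \<forall>Y\<in>KX n. \<phi> (c \<cdot>\<^sub>m Y) = c \<cdot>\<^sub>m \<phi> Y) \<and>
     (\<forall>Y\<in>KX n. \<forall>Z\<in>KX n. \<phi> (Y * Z) = \<phi> Y * \<phi> Z) \<and>
     \<phi> (1\<^sub>m n) = 1\<^sub>m n"

definition induces_by_conj :: "nat \<Rightarrow> ('a::field mat \<Rightarrow> 'a mat) \<Rightarrow> 'a mat \<Rightarrow> bool" where
  "induces_by_conj n \<phi> A \<longleftrightarrow>
     A \<in> carrier_mat n n \<and> invertible_mat A \<and>
     (\<exists>B \<in> carrier_mat n n. A * B = 1\<^sub>m n \<and> B * A = 1\<^sub>m n \<and>
        (\<forall>Y\<in>KX n. \<phi> Y = A * Y * B))"

definition KX_unit :: "nat \<Rightarrow> 'a::field mat \<Rightarrow> bool" where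
  "KX_unit n C \<longleftrightarrow> C \<in> KX n \<and> (\<exists>D\<in>KX n. C * D = 1\<^sub>m n \<and> D * C = 1\<^sub>m n)"

end

theory Submission
  imports Defs "Jordan_Normal_Form.Determinant"
begin

lemma shift_carrier[simp]: "shift_mat n \<in> carrier_mat n n"
  unfolding shift_mat_def by auto

lemma shift_dims[simp]: "dim_row (shift_mat n) = n" "dim_col (shift_mat n) = n"
  unfolding shift_mat_def by auto

lemma shift_idx: "i < n \<Longrightarrow> j < n \<Longrightarrow> shift_mat n $$ (i,j) = (if j = i + 1 then 1 else 0)"
  unfolding shift_mat_def by auto

lemma mult_shift_right:
  assumes A: "A \<in> carrier_mat n n" and i: "i < n" and j: "j < n"
  shows "(A * shift_mat n) $$ (i,j) = (if j = 0 then 0 else A $$ (i, j - 1))"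
proof -
  have "(A * shift_mat n) $$ (i,j) = (\<Sum>k\<in>{0..<n}. A $$ (i,k) * (if j = k + 1 then 1 else 0))"
    using A i j by (simp add: scalar_prod_def shift_idx)
  also have "\<dots> = (\<Sum>k\<in>{0..<n}. if k = j - 1 \<and> j \<noteq> 0 then A $$ (i,k) else 0)"
    by (rule sum.cong, auto)
  also have "\<dots> = (if j = 0 then 0 else A $$ (i, j - 1))"
    using j by (cases "j = 0", auto)
  finally show ?thesis .
qed

lemma mult_shift_left:
  assumes A: "A \<in> carrier_mat n n" and i: "i < n" and j: "j < n"
  shows "(shift_mat n * A) $$ (i,j) = (if i + 1 < n then A $$ (i + 1, j) else 0)"
proof -
  have "(shift_mat n * A) $$ (i,j) = (\<Sum>k\<in>{0..<n}. (if k = i + 1 then 1 else 0) * A $$ (k,j))"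
    using A i j by (simp add: scalar_prod_def shift_idx)
  also have "\<dots> = (\<Sum>k\<in>{0..<n}. if k = i + 1 then A $$ (k,j) else 0)"
    by (rule sum.cong, auto)
  also have "\<dots> = (if i + 1 < n then A $$ (i + 1, j) else 0)"
    by auto
  finally show ?thesis .
qed

lemma KX_carrier: "Y \<in> KX n \<Longrightarrow> Y \<in> carrier_mat n n"
  by (induction rule: KX.induct) auto

lemma KX_comm: "Y \<in> KX n \<Longrightarrow> Y * shift_mat n = shift_mat n * Y"
proof (induction rule: KX.induct)
  case gen then show ?case by simp
next
  case one then show ?case by (metis left_mult_one_mat right_mult_one_mat shift_carrier)
next
  case (add Y Z)
  then show ?case using KX_carrier[OF add.hyps(1)] KX_carrier[OF add.hyps(2)]
    by (simp add: add_mult_distrib_mat[of Y n n Z "shift_mat n" n] mult_add_distrib_mat[of "shift_mat n" n n Y n Z])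
next
  case (smult Y c)
  then show ?case using KX_carrier[OF smult.hyps(1)]
    by (simp add: mult_smult_assoc_mat[of Y n n "shift_mat n" n c] mult_smult_distrib[of "shift_mat n" n n Y n c])
next
  case (mult Y Z)
  have Y: "Y \<in> carrier_mat n n" and Z: "Z \<in> carrier_mat n n"
    using KX_carrier mult.hyps by auto
  have "Y * Z * shift_mat n = Y * (Z * shift_mat n)" using assoc_mult_mat[OF Y Z shift_carrier] .
  also have "\<dots> = Y * shift_mat n * Z" using assoc_mult_mat[OF Y shift_carrier Z] mult.IH by simp
  also have "\<dots> = shift_mat n * (Y * Z)" using assoc_mult_mat[OF shift_carrier Y Z] mult.IH by simp
  finally show ?case .
qed

lemma KX_pow: "Y \<in> KX n \<Longrightarrow> Y ^\<^sub>m k \<in> KX n"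
proof (induction k)
  case 0 then show ?case using KX_carrier[OF 0] KX.one by simp
next
  case (Suc k) then show ?case by (simp add: KX.mult)
qed

lemma comm_toep:
  assumes M: "M \<in> carrier_mat n n" and c: "M * shift_mat n = shift_mat n * M"
  shows "i < n \<Longrightarrow> j < n \<Longrightarrow> M $$ (i,j) = (if i \<le> j then M $$ (0, j - i) else 0)"
proof (induction i arbitrary: j)
  case 0 then show ?case by simp
next
  case (Suc i)
  have "M $$ (Suc i, j) = (shift_mat n * M) $$ (i,j)"
    using mult_shift_left[OF M, of i j] Suc.prems by simp
  also have "\<dots> = (M * shift_mat n) $$ (i,j)" using c by simp
  also have "\<dots> = (if j = 0 then 0 else M $$ (i, j - 1))"
    using mult_shift_right[OF M, of i j] Suc.prems by simp
  also have "\<dots> = (if Suc i \<le> j then M $$ (0, j - Suc i) else 0)"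
    using Suc.IH[of "j - 1"] Suc.prems by auto
  finally show ?case .
qed

lemma pow_shift_dims[simp]: "dim_row (shift_mat n ^\<^sub>m d) = n" "dim_col (shift_mat n ^\<^sub>m d) = n"
  by auto

lemma pow_shift_idx: "i < n \<Longrightarrow> j < n \<Longrightarrow> ((shift_mat n :: 'a::field mat) ^\<^sub>m d) $$ (i,j) = (if j = i + d then 1 else 0)"
proof (induction d arbitrary: j)
  case 0 then show ?case by (simp add: shift_mat_def)
next
  case (Suc d)
  note IH = Suc.IH and pr = Suc.prems
  have "(shift_mat n ^\<^sub>m Suc d) $$ (i,j) = ((shift_mat n :: 'a mat) ^\<^sub>m d * shift_mat n) $$ (i,j)" by simp
  also have "\<dots> = (if j = 0 then 0 else ((shift_mat n :: 'a mat) ^\<^sub>m d) $$ (i, j - 1))"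
    by (rule mult_shift_right, auto simp: Suc.prems)
  also have "\<dots> = (if j = i + Suc d then 1 else 0)"
  proof (cases j)
    case 0 then show ?thesis by simp
  next
    case (Suc j') 
    then have "j' < n" using pr by simp
    then show ?thesis using IH[of j'] Suc pr by simp
  qed
  finally show ?case .
qed


definition toep :: "nat \<Rightarrow> (nat \<Rightarrow> 'a::field) \<Rightarrow> 'a mat" where
  "toep n f = mat n n (\<lambda>(i,j). if i \<le> j then f (j - i) else 0)"

lemma toep_KX_aux: "toep n (\<lambda>d. if d < m then f d else 0) \<in> KX n"
proof (induction m)
  case 0
  have "toep n (\<lambda>d. if d < 0 then f d else 0) = 0 \<cdot>\<^sub>m 1\<^sub>m n"
    by (rule eq_matI, auto simp: toep_def)
  then show ?case using KX.one KX.smult by metis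
next
  case (Suc m)
  have P: "shift_mat n ^\<^sub>m m \<in> KX n" by (rule KX_pow, rule KX.gen)
  have "toep n (\<lambda>d. if d < Suc m then f d else 0) =
     toep n (\<lambda>d. if d < m then f d else 0) + f m \<cdot>\<^sub>m (shift_mat n ^\<^sub>m m)"
    by (rule eq_matI, auto simp del: pow_mat_dim simp: toep_def pow_shift_idx less_Suc_eq)
  then show ?case using Suc.IH P KX.add KX.smult by metis
qed

lemma toep_KX: "toep n f \<in> KX n"
proof -
  have "toep n f = toep n (\<lambda>d. if d < n then f d else 0)"
    by (rule eq_matI, auto simp: toep_def)
  then show ?thesis using toep_KX_aux by metis
qed

lemma comm_KX:
  assumes M: "M \<in> carrier_mat n n" and c: "M * shift_mat n = shift_mat n * M"
  shows "M \<in> KX n"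
proof -
  have "M = toep n (\<lambda>d. M $$ (0,d))"
    by (rule eq_matI, insert M, auto simp: toep_def comm_toep[OF M c])
  then show ?thesis using toep_KX by metis
qed

lemma KX_toep: "M \<in> KX n \<Longrightarrow> i < n \<Longrightarrow> j < n \<Longrightarrow> M $$ (i,j) = (if i \<le> j then M $$ (0, j - i) else 0)"
  using comm_toep KX_carrier KX_comm by metis

lemma KX_mult_entry:
  assumes M: "M \<in> KX n" and N: "N \<in> KX n" and d: "d < n"
  shows "(M * N) $$ (0,d) = (\<Sum>l\<in>{0..<n}. M $$ (0,l) * (if l \<le> d then N $$ (0, d - l) else 0))"
proof -
  have Mc: "M \<in> carrier_mat n n" and Nc: "N \<in> carrier_mat n n" using KX_carrier M N by auto
  have "(M * N) $$ (0,d) = (\<Sum>l\<in>{0..<n}. M $$ (0,l) * N $$ (l,d))"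
    using Mc Nc d by (simp add: scalar_prod_def)
  also have "\<dots> = (\<Sum>l\<in>{0..<n}. M $$ (0,l) * (if l \<le> d then N $$ (0, d - l) else 0))"
    by (rule sum.cong, simp, subst KX_toep[OF N], insert d, auto)
  finally show ?thesis .
qed

lemma KX_mult_val0:
  assumes M: "M \<in> KX n" and N: "N \<in> KX n"
    and hM: "\<And>d. d < a \<Longrightarrow> d < n \<Longrightarrow> M $$ (0,d) = 0"
    and hN: "\<And>d. d < b \<Longrightarrow> d < n \<Longrightarrow> N $$ (0,d) = 0"
    and d: "d < a + b" "d < n"
  shows "(M * N) $$ (0,d) = 0"
proof -
  have "(M * N) $$ (0,d) = (\<Sum>l\<in>{0..<n}. M $$ (0,l) * (if l \<le> d then N $$ (0, d - l) else 0))"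
    using KX_mult_entry[OF M N d(2)] .
  also have "\<dots> = 0"
  proof (rule sum.neutral, intro ballI)
    fix l assume l: "l \<in> {0..<n}"
    show "M $$ (0,l) * (if l \<le> d then N $$ (0, d - l) else 0) = 0"
    proof (cases "l < a")
      case True then show ?thesis using hM l by auto
    next
      case False then show ?thesis using hN d by auto
    qed
  qed
  finally show ?thesis .
qed

lemma KX_mult_val1:
  assumes M: "M \<in> KX n" and N: "N \<in> KX n"
    and hM: "\<And>d. d < a \<Longrightarrow> d < n \<Longrightarrow> M $$ (0,d) = 0"
    and hN: "\<And>d. d < b \<Longrightarrow> d < n \<Longrightarrow> N $$ (0,d) = 0"
    and d: "a + b < n"
  shows "(M * N) $$ (0,a + b) = M $$ (0,a) * N $$ (0,b)"
proof -
  have "(M * N) $$ (0,a+b) = (\<Sum>l\<in>{0..<n}. M $$ (0,l) * (if l \<le> a+b then N $$ (0, a+b - l) else 0))"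
    using KX_mult_entry[OF M N d] .
  also have "\<dots> = (\<Sum>l\<in>{0..<n}. if l = a then M $$ (0,a) * N $$ (0,b) else 0)"
  proof (rule sum.cong, simp)
    fix l assume l: "l \<in> {0..<n}"
    show "M $$ (0,l) * (if l \<le> a+b then N $$ (0, a+b - l) else 0) = (if l = a then M $$ (0,a) * N $$ (0,b) else 0)"
    proof (cases "l < a")
      case True then show ?thesis using hM l by auto
    next
      case False
      then show ?thesis using hN[of "a + b - l"] l d by (cases "l = a") auto
    qed
  qed
  also have "\<dots> = M $$ (0,a) * N $$ (0,b)" using d by simp
  finally show ?thesis .
qed

lemma KX_mult_01:
  assumes M: "M \<in> KX n" and N: "N \<in> KX n" and n: "2 \<le> n"
  shows "(M * N) $$ (0,1) = M $$ (0,0) * N $$ (0,1) + M $$ (0,1) * N $$ (0,0)"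
proof -
  have "(M * N) $$ (0,1) = (\<Sum>l\<in>{0..<n}. M $$ (0,l) * (if l \<le> 1 then N $$ (0, 1 - l) else 0))"
    by (rule KX_mult_entry[OF M N]) (use n in simp)
  also have "\<dots> = (\<Sum>l\<in>{0..<n}. (if l = 0 then M $$ (0,0) * N $$ (0,1) else 0) + (if l = 1 then M $$ (0,1) * N $$ (0,0) else 0))"
    by (rule sum.cong, auto simp: le_Suc_eq)
  also have "\<dots> = M $$ (0,0) * N $$ (0,1) + M $$ (0,1) * N $$ (0,0)"
    using n by (simp add: sum.distrib)
  finally show ?thesis .
qed

locale autKX =
  fixes n :: nat and \<phi> :: "'a::field mat \<Rightarrow> 'a mat"
  assumes n2: "2 \<le> n" and aut: "KX_automorphism n \<phi>"
begin

abbreviation XX :: "'a mat" where "XX \<equiv> shift_mat n"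
abbreviation YY :: "'a mat" where "YY \<equiv> \<phi> (shift_mat n)"

lemma phi_KX: "Z \<in> KX n \<Longrightarrow> \<phi> Z \<in> KX n"
  using aut unfolding KX_automorphism_def by (meson bij_betw_apply)

lemma phi_surj: "Z \<in> KX n \<Longrightarrow> \<exists>W\<in>KX n. \<phi> W = Z"
  using aut unfolding KX_automorphism_def bij_betw_def by (metis imageE)

lemma phi_add: "Y \<in> KX n \<Longrightarrow> Z \<in> KX n \<Longrightarrow> \<phi> (Y + Z) = \<phi> Y + \<phi> Z"
  using aut unfolding KX_automorphism_def by blast
lemma phi_smult: "Y \<in> KX n \<Longrightarrow> \<phi> (c \<cdot>\<^sub>m Y) = c \<cdot>\<^sub>m \<phi> Y"
  using aut unfolding KX_automorphism_def by blast
lemma phi_mult: "Y \<in> KX n \<Longrightarrow> Z \<in> KX n \<Longrightarrow> \<phi> (Y * Z) = \<phi> Y * \<phi> Z"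
  using aut unfolding KX_automorphism_def by blast
lemma phi_one: "\<phi> (1\<^sub>m n) = 1\<^sub>m n"
  using aut unfolding KX_automorphism_def by blast

lemma YY_KX: "YY \<in> KX n" by (rule phi_KX, rule KX.gen)
lemma YY_carrier: "YY \<in> carrier_mat n n" by (rule KX_carrier, rule YY_KX)
lemma YY_dims[simp]: "dim_row YY = n" "dim_col YY = n" using YY_carrier by auto

lemma phi_pow: "\<phi> (XX ^\<^sub>m k) = YY ^\<^sub>m k"
proof (induction k)
  case 0 then show ?case using phi_one YY_carrier by simp
next
  case (Suc k)
  have "\<phi> (XX ^\<^sub>m Suc k) = \<phi> (XX ^\<^sub>m k * XX)" by simp
  also have "\<dots> = \<phi> (XX ^\<^sub>m k) * YY" by (rule phi_mult, rule KX_pow, rule KX.gen, rule KX.gen)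
  finally show ?case using Suc by simp
qed

lemma XX_pow_n: "XX ^\<^sub>m n = 0\<^sub>m n n"
  by (rule eq_matI, auto simp del: pow_mat_dim simp: pow_shift_idx)

lemma phi_zero: "\<phi> (0\<^sub>m n n) = 0\<^sub>m n n"
proof -
  have "0\<^sub>m n n = (0::'a) \<cdot>\<^sub>m 1\<^sub>m n" by (rule eq_matI, auto)
  then have "\<phi> (0\<^sub>m n n) = 0 \<cdot>\<^sub>m \<phi> (1\<^sub>m n)" using phi_smult KX.one by metis
  also have "\<dots> = 0\<^sub>m n n" using phi_one by (auto)
  finally show ?thesis .
qed

lemma YY_pow_n: "YY ^\<^sub>m n = 0\<^sub>m n n"
  using phi_pow[of n] XX_pow_n phi_zero by simp

lemma KX_pow00: "M \<in> KX n \<Longrightarrow> (M ^\<^sub>m k) $$ (0,0) = M $$ (0,0) ^ k"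
proof (induction k)
  case 0 then show ?case using KX_carrier[OF 0] n2 by simp
next
  case (Suc k)
  have "(M ^\<^sub>m Suc k) $$ (0,0) = (M ^\<^sub>m k * M) $$ (0,0)" by simp
  also have "\<dots> = (M ^\<^sub>m k * M) $$ (0,0+0)" by simp
  also have "\<dots> = (M ^\<^sub>m k) $$ (0,0) * M $$ (0,0)"
    by (rule KX_mult_val1, rule KX_pow, rule Suc.prems, rule Suc.prems, use n2 in auto)
  finally show ?case using Suc by simp
qed

lemma YY00: "YY $$ (0,0) = 0"
proof -
  have "(YY ^\<^sub>m n) $$ (0,0) = 0" using YY_pow_n n2 by simp
  then have "YY $$ (0,0) ^ n = 0" using KX_pow00[OF YY_KX] by simp
  then show ?thesis using n2 by simp
qed

lemma phi_inv: "Z \<in> KX n \<Longrightarrow> \<phi> Z $$ (0,0) = Z $$ (0,0) \<and> \<phi> Z $$ (0,1) = Z $$ (0,1) * YY $$ (0,1)"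
proof (induction rule: KX.induct)
  case gen then show ?case using YY00 n2 by (simp add: shift_idx)
next
  case one then show ?case using phi_one n2 by simp
next
  case (add Y Z)
  have c: "\<phi> Y \<in> carrier_mat n n" "\<phi> Z \<in> carrier_mat n n" "Y \<in> carrier_mat n n" "Z \<in> carrier_mat n n"
    using add.hyps phi_KX KX_carrier by auto
  then show ?case using add phi_add n2 by (simp add: algebra_simps)
next
  case (smult Y c)
  have cc: "\<phi> Y \<in> carrier_mat n n" "Y \<in> carrier_mat n n"
    using smult.hyps phi_KX KX_carrier by auto
  then show ?case using smult phi_smult n2 by simp
next
  case (mult Y Z)
  have "\<phi> (Y * Z) = \<phi> Y * \<phi> Z" using phi_mult mult.hyps by blast
  moreover have "(\<phi> Y * \<phi> Z) $$ (0,0) = \<phi> Y $$ (0,0) * \<phi> Z $$ (0,0)"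
    using KX_mult_val1[OF phi_KX[OF mult.hyps(1)] phi_KX[OF mult.hyps(2)], of 0 0] n2 by simp
  moreover have "(Y * Z) $$ (0,0) = Y $$ (0,0) * Z $$ (0,0)"
    using KX_mult_val1[OF mult.hyps(1) mult.hyps(2), of 0 0] n2 by simp
  moreover have "(\<phi> Y * \<phi> Z) $$ (0,1) = \<phi> Y $$ (0,0) * \<phi> Z $$ (0,1) + \<phi> Y $$ (0,1) * \<phi> Z $$ (0,0)"
    using KX_mult_01[OF phi_KX[OF mult.hyps(1)] phi_KX[OF mult.hyps(2)] n2] .
  moreover have "(Y * Z) $$ (0,1) = Y $$ (0,0) * Z $$ (0,1) + Y $$ (0,1) * Z $$ (0,0)"
    using KX_mult_01[OF mult.hyps(1) mult.hyps(2) n2] .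
  ultimately show ?case using mult.IH by (simp add: algebra_simps)
qed

lemma YY01: "YY $$ (0,1) \<noteq> 0"
proof -
  obtain W where W: "W \<in> KX n" "\<phi> W = XX" using phi_surj KX.gen by blast
  have "XX $$ (0,1) = 1" using n2 by (simp add: shift_idx)
  then show ?thesis using phi_inv[OF W(1)] W(2) by auto
qed

lemma YY_pow_KX: "YY ^\<^sub>m k \<in> KX n" by (rule KX_pow, rule YY_KX)

lemma YY_pow_val: "(\<forall>d<k. d < n \<longrightarrow> (YY ^\<^sub>m k) $$ (0,d) = 0) \<and> (k < n \<longrightarrow> (YY ^\<^sub>m k) $$ (0,k) = YY $$ (0,1) ^ k)"
proof (induction k)
  case 0 then show ?case using YY_carrier n2 by simp
next
  case (Suc k)
  have hN: "\<And>d. d < 1 \<Longrightarrow> d < n \<Longrightarrow> YY $$ (0,d) = 0" using YY00 by auto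
  have hM: "\<And>d. d < k \<Longrightarrow> d < n \<Longrightarrow> (YY ^\<^sub>m k) $$ (0,d) = 0" using Suc by auto
  have A: "\<forall>d<Suc k. d < n \<longrightarrow> (YY ^\<^sub>m Suc k) $$ (0,d) = 0"
    using KX_mult_val0[where M="YY ^\<^sub>m k" and N=YY and a=k and b=1, OF YY_pow_KX YY_KX hM hN] by simp
  have B: "Suc k < n \<longrightarrow> (YY ^\<^sub>m Suc k) $$ (0,Suc k) = YY $$ (0,1) ^ Suc k"
    using KX_mult_val1[where M="YY ^\<^sub>m k" and N=YY and a=k and b=1, OF YY_pow_KX YY_KX hM hN] Suc by simp
  show ?case using A B by blast
qed

definition AA :: "'a mat" where
  "AA = mat n n (\<lambda>(i,j). (YY ^\<^sub>m (n - 1 - j)) $$ (i, n - 1))"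

lemma AA_carrier: "AA \<in> carrier_mat n n" unfolding AA_def by simp

lemma YY_pow_last: "i < n \<Longrightarrow> (YY ^\<^sub>m k) $$ (i, n - 1) = (YY ^\<^sub>m k) $$ (0, n - 1 - i)"
  using KX_toep[OF YY_pow_KX, of i "n - 1" k] by simp

lemma AA_ut: "upper_triangular AA"
  unfolding upper_triangular_def
proof (intro allI impI)
  fix i j assume i: "i < dim_row AA" and j: "j < i"
  then have "i < n" using AA_carrier by simp
  then show "AA $$ (i,j) = 0" using j YY_pow_last YY_pow_val unfolding AA_def by simp
qed

lemma AA_diag: "j < n \<Longrightarrow> AA $$ (j,j) = YY $$ (0,1) ^ (n - 1 - j)"
  using YY_pow_last YY_pow_val unfolding AA_def by simp

lemma AA_det: "det AA \<noteq> 0"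
proof -
  have "det AA = prod_list (diag_mat AA)" by (rule det_upper_triangular[OF AA_ut AA_carrier])
  also have "\<dots> = (\<Prod>i = 0 ..< n. AA $$ (i,i))" using AA_carrier by (simp add: prod_list_diag_prod)
  also have "\<dots> \<noteq> 0" using AA_diag YY01 by simp
  finally show ?thesis .
qed

lemma AA_col: "col AA (n - 1) = unit_vec n (n - 1)"
  by (rule eq_vecI, insert n2, auto simp: AA_def YY_carrier)

lemma col_AA: "j < n \<Longrightarrow> col AA j = col (YY ^\<^sub>m (n - 1 - j)) (n - 1)"
  by (rule eq_vecI, insert n2, auto simp: AA_def YY_carrier)

lemma YY_pow_Suc_left: "YY * YY ^\<^sub>m k = YY ^\<^sub>m Suc k"
proof (induction k)
  case 0 then show ?case using YY_carrier by simp
next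
  case (Suc k)
  have "YY * YY ^\<^sub>m Suc k = YY * (YY ^\<^sub>m k * YY)" by simp
  also have "\<dots> = (YY * YY ^\<^sub>m k) * YY" using YY_carrier by (simp add: assoc_mult_mat[of _ n n _ n _ n])
  finally show ?case using Suc by simp
qed

lemma AA_comm: "AA * XX = YY * AA"
proof (rule eq_matI)
  fix i j assume i: "i < dim_row (YY * AA)" and j: "j < dim_col (YY * AA)"
  then have i: "i < n" and j: "j < n" using YY_carrier AA_carrier by auto
  have "(YY * AA) $$ (i,j) = row YY i \<bullet> col AA j" using i j YY_carrier AA_carrier by simp
  also have "\<dots> = row YY i \<bullet> col (YY ^\<^sub>m (n - 1 - j)) (n - 1)" using col_AA j by simp
  also have "\<dots> = (YY * YY ^\<^sub>m (n - 1 - j)) $$ (i, n - 1)" using i n2 YY_carrier by simp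
  also have "\<dots> = (YY ^\<^sub>m (n - j)) $$ (i, n - 1)"
  proof -
    have "n - j = Suc (n - 1 - j)" using j by simp
    then show ?thesis using YY_pow_Suc_left by simp
  qed
  also have "\<dots> = (AA * XX) $$ (i,j)"
  proof (cases j)
    case 0 then show ?thesis using YY_pow_n mult_shift_right[OF AA_carrier i j] i n2 by simp
  next
    case (Suc j')
    then show ?thesis using mult_shift_right[OF AA_carrier i j] i j unfolding AA_def by simp
  qed
  finally show "(AA * XX) $$ (i,j) = (YY * AA) $$ (i,j)" by simp
qed (use AA_carrier YY_carrier in auto)

lemma AA_inv: "\<exists>BB \<in> carrier_mat n n. AA * BB = 1\<^sub>m n \<and> BB * AA = 1\<^sub>m n"
  using det_non_zero_imp_unit[OF AA_carrier AA_det, of "()"]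
  unfolding Units_def ring_mat_def by auto

lemma exists_conj: "\<exists>A. upper_triangular A \<and> induces_by_conj n \<phi> A \<and> col A (n - 1) = unit_vec n (n - 1)"
proof -
  obtain BB where BB: "BB \<in> carrier_mat n n" "AA * BB = 1\<^sub>m n" "BB * AA = 1\<^sub>m n"
    using AA_inv by blast
  note A = AA_carrier
  have canc: "\<And>(W::'a mat) k. W \<in> carrier_mat n k \<Longrightarrow> BB * (AA * W) = W"
  proof -
    fix W :: "'a mat" and k assume W: "W \<in> carrier_mat n (k::nat)"
    have "BB * (AA * W) = (BB * AA) * W" by (rule assoc_mult_mat[symmetric]) (use A BB W in auto)
    then show "BB * (AA * W) = W" using BB W by simp
  qed
  have conj: "\<phi> Z = AA * Z * BB" if Z: "Z \<in> KX n" for Z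
    using Z
  proof (induction rule: KX.induct)
    case gen
    have "AA * XX * BB = YY * AA * BB" using AA_comm by simp
    also have "\<dots> = YY * (AA * BB)" using A BB YY_carrier by (simp add: assoc_mult_mat[of _ n n _ n _ n])
    finally show ?case using BB YY_carrier by simp
  next
    case one then show ?case using A BB phi_one by simp
  next
    case (add Y Z)
    have c: "Y \<in> carrier_mat n n" "Z \<in> carrier_mat n n" using add.hyps KX_carrier by auto
    have "AA * (Y + Z) * BB = AA * Y * BB + AA * Z * BB"
      using A BB c by (simp add: mult_add_distrib_mat[of _ n n _ n] add_mult_distrib_mat[of _ n n _ _ n])
    then show ?case using add phi_add by simp
  next
    case (smult Y c)
    have cY: "Y \<in> carrier_mat n n" using smult.hyps KX_carrier by auto
    have "AA * (c \<cdot>\<^sub>m Y) * BB = c \<cdot>\<^sub>m (AA * Y * BB)"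
      using A BB cY by (simp add: mult_smult_distrib[of _ n n _ n] mult_smult_assoc_mat[of _ n n _ n])
    then show ?case using smult phi_smult by simp
  next
    case (mult Y Z)
    have c: "Y \<in> carrier_mat n n" "Z \<in> carrier_mat n n" using mult.hyps KX_carrier by auto
    have "(AA * Y * BB) * (AA * Z * BB) = AA * (Y * (BB * (AA * (Z * BB))))"
      using A BB c by (simp add: assoc_mult_mat[of _ n n _ n _ n])
    also have "\<dots> = AA * (Y * (Z * BB))" using canc[of "Z * BB" n] c BB by simp
    also have "\<dots> = AA * (Y * Z) * BB" using A BB c by (simp add: assoc_mult_mat[of _ n n _ n _ n])
    finally show ?case using mult phi_mult by simp
  qed
  have "invertible_mat AA"
    unfolding invertible_mat_def inverts_mat_def square_mat.simps using A BB by auto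
  then have "induces_by_conj n \<phi> AA"
    unfolding induces_by_conj_def using A BB conj by blast
  then show ?thesis using AA_ut AA_col by blast
qed

end

lemma mult_nn[simp]: "A \<in> carrier_mat n n \<Longrightarrow> B \<in> carrier_mat n n \<Longrightarrow> A * B \<in> carrier_mat n n"
  by simp

lemma conj_comm:
  assumes c: "A1 \<in> carrier_mat n n" "B1 \<in> carrier_mat n n" "A2 \<in> carrier_mat n n" "B2 \<in> carrier_mat n n"
    and i1: "B1 * A1 = 1\<^sub>m n" and i2: "B2 * A2 = 1\<^sub>m n"
    and e: "A1 * shift_mat n * B1 = A2 * shift_mat n * B2"
  shows "(B1 * A2) * shift_mat n = shift_mat n * (B1 * A2)"
proof -
  let ?X = "shift_mat n :: 'a::field mat"
  have X: "?X \<in> carrier_mat n n" by simp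
  have e2: "A2 * ?X * B2 * A2 = A2 * ?X"
  proof -
    have "A2 * ?X * B2 * A2 = A2 * ?X * (B2 * A2)" by (rule assoc_mult_mat) (use c X in auto)
    also have "\<dots> = A2 * ?X" using i2 c X by simp
    finally show ?thesis .
  qed
  have "(B1 * A2) * ?X = B1 * (A2 * ?X)" using c X by (simp add: assoc_mult_mat[of _ n n _ n _ n])
  also have "\<dots> = B1 * (A2 * ?X * B2 * A2)" using e2 by simp
  also have "\<dots> = B1 * (A1 * ?X * B1 * A2)" using e by simp
  also have "\<dots> = (B1 * A1) * (?X * (B1 * A2))" using c X by (simp add: assoc_mult_mat[of _ n n _ n _ n])
  also have "\<dots> = ?X * (B1 * A2)" using i1 c X by simp
  finally show ?thesis .
qed

lemma induces_conj_comm: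
  assumes "induces_by_conj n \<phi> A1" and "induces_by_conj n \<phi> A2"
  shows "\<exists>B1\<in>carrier_mat n n. A1 * B1 = 1\<^sub>m n \<and> B1 * A1 = 1\<^sub>m n \<and> B1 * A2 \<in> KX n"
proof -
  obtain B1 where B1: "B1 \<in> carrier_mat n n" "A1 * B1 = 1\<^sub>m n" "B1 * A1 = 1\<^sub>m n" "\<forall>Y\<in>KX n. \<phi> Y = A1 * Y * B1"
    and A1: "A1 \<in> carrier_mat n n" using assms(1) unfolding induces_by_conj_def by blast
  obtain B2 where B2: "B2 \<in> carrier_mat n n" "A2 * B2 = 1\<^sub>m n" "B2 * A2 = 1\<^sub>m n" "\<forall>Y\<in>KX n. \<phi> Y = A2 * Y * B2"
    and A2: "A2 \<in> carrier_mat n n" using assms(2) unfolding induces_by_conj_def by blast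
  have e: "A1 * shift_mat n * B1 = A2 * shift_mat n * B2" using B1(4) B2(4) KX.gen by metis
  have "B1 * A2 \<in> KX n"
    by (rule comm_KX, use A2 B1 in simp, rule conj_comm[OF A1 B1(1) A2 B2(1) B1(3) B2(3) e])
  then show ?thesis using B1 by blast
qed

lemma part3:
  assumes "induces_by_conj n \<phi> A1" and "induces_by_conj n \<phi> A2"
  shows "\<exists>C. KX_unit n C \<and> A2 = A1 * C"
proof -
  obtain B1 where B1: "B1 \<in> carrier_mat n n" "A1 * B1 = 1\<^sub>m n" "B1 * A1 = 1\<^sub>m n" "B1 * A2 \<in> KX n"
    using induces_conj_comm[OF assms] by blast
  obtain B2 where B2: "B2 \<in> carrier_mat n n" "A2 * B2 = 1\<^sub>m n" "B2 * A2 = 1\<^sub>m n" "B2 * A1 \<in> KX n"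
    using induces_conj_comm[OF assms(2,1)] by blast
  have A1: "A1 \<in> carrier_mat n n" and A2: "A2 \<in> carrier_mat n n"
    using assms unfolding induces_by_conj_def by auto
  have "(B1 * A2) * (B2 * A1) = B1 * (A2 * (B2 * A1))" by (rule assoc_mult_mat) (use A1 A2 B1 B2 in auto)
  also have "A2 * (B2 * A1) = (A2 * B2) * A1" by (rule assoc_mult_mat[symmetric]) (use A1 A2 B1 B2 in auto)
  also have "\<dots> = A1" using B2 A1 by simp
  also have "B1 * A1 = 1\<^sub>m n" using B1 by simp
  finally have CD: "(B1 * A2) * (B2 * A1) = 1\<^sub>m n" .
  have "(B2 * A1) * (B1 * A2) = B2 * (A1 * (B1 * A2))" by (rule assoc_mult_mat) (use A1 A2 B1 B2 in auto)
  also have "A1 * (B1 * A2) = (A1 * B1) * A2" by (rule assoc_mult_mat[symmetric]) (use A1 A2 B1 B2 in auto)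
  also have "\<dots> = A2" using B1 A2 by simp
  also have "B2 * A2 = 1\<^sub>m n" using B2 by simp
  finally have DC: "(B2 * A1) * (B1 * A2) = 1\<^sub>m n" .
  have "A1 * (B1 * A2) = (A1 * B1) * A2" by (rule assoc_mult_mat[symmetric]) (use A1 A2 B1 in auto)
  also have "\<dots> = A2" using B1 A2 by simp
  finally have "A2 = A1 * (B1 * A2)" by simp
  moreover have "KX_unit n (B1 * A2)" unfolding KX_unit_def using B1(4) B2(4) CD DC by blast
  ultimately show ?thesis by blast
qed

lemma uniq:
  assumes "induces_by_conj n \<phi> A1" and "induces_by_conj n \<phi> A2"
    and c1: "col A1 (n - 1) = unit_vec n (n - 1)" and c2: "col A2 (n - 1) = unit_vec n (n - 1)"
    and n: "1 \<le> n"
  shows "A2 = A1"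
proof -
  obtain B1 where B1: "B1 \<in> carrier_mat n n" "A1 * B1 = 1\<^sub>m n" "B1 * A1 = 1\<^sub>m n" "B1 * A2 \<in> KX n"
    using induces_conj_comm[OF assms(1,2)] by blast
  have A1: "A1 \<in> carrier_mat n n" and A2: "A2 \<in> carrier_mat n n"
    using assms unfolding induces_by_conj_def by auto
  define C where "C = B1 * A2"
  have CK: "C \<in> KX n" using B1 C_def by simp
  have Ccol: "C $$ (i, n - 1) = (if i = n - 1 then 1 else 0)" if i: "i < n" for i
  proof -
    have "C $$ (i, n - 1) = row B1 i \<bullet> col A2 (n - 1)" using i n A2 B1 C_def by simp
    also have "\<dots> = row B1 i \<bullet> col A1 (n - 1)" using c1 c2 by simp
    also have "\<dots> = (B1 * A1) $$ (i, n - 1)" using i n A1 B1(1) by simp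
    also have "\<dots> = 1\<^sub>m n $$ (i, n - 1)" by (simp only: B1(3))
    finally show ?thesis using i n by simp
  qed
  have C0: "C $$ (0, d) = (if d = 0 then 1 else 0)" if d: "d < n" for d
  proof -
    have "C $$ (n - 1 - d, n - 1) = C $$ (0, d)" using KX_toep[OF CK, of "n - 1 - d" "n - 1"] d by simp
    then show ?thesis using Ccol[of "n - 1 - d"] d by auto
  qed
  have "C = 1\<^sub>m n"
  proof (rule eq_matI)
    fix i j assume "i < dim_row (1\<^sub>m n :: 'a mat)" "j < dim_col (1\<^sub>m n :: 'a mat)"
    then have i: "i < n" and j: "j < n" by auto
    show "C $$ (i,j) = 1\<^sub>m n $$ (i,j)" using KX_toep[OF CK i j] C0 i j by auto
  qed (use CK KX_carrier in auto)
  have "A1 * C = (A1 * B1) * A2" unfolding C_def by (rule assoc_mult_mat[symmetric]) (use A1 A2 B1 in auto)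
  also have "\<dots> = A2" using B1 A2 by simp
  finally show ?thesis using \<open>C = 1\<^sub>m n\<close> A1 by simp
qed

theorem lemma3p3:
  fixes \<phi> :: "'a::field mat \<Rightarrow> 'a mat" and p s n :: nat
  assumes "CHAR('a) = p" and "p > 0" and "s \<ge> 1" and "n = 1 + p ^ s"
    and "KX_automorphism n \<phi>"
  shows "(\<exists>A. upper_triangular A \<and> induces_by_conj n \<phi> A)
    \<and> (\<exists>!A. upper_triangular A \<and> induces_by_conj n \<phi> A \<and> col A (n - 1) = unit_vec n (n - 1))
    \<and> (\<forall>A B. upper_triangular A \<and> induces_by_conj n \<phi> A \<and> col A (n - 1) = unit_vec n (n - 1)
              \<and> induces_by_conj n \<phi> B \<longrightarrow> (\<exists>C. KX_unit n C \<and> B = A * C))"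
proof -
  have n2: "2 \<le> n" using assms(2,4) by simp
  interpret autKX n \<phi> by (unfold_locales, rule n2, rule assms(5))
  obtain A0 where A0: "upper_triangular A0" "induces_by_conj n \<phi> A0" "col A0 (n - 1) = unit_vec n (n - 1)"
    using exists_conj by blast
  have P1: "\<exists>A. upper_triangular A \<and> induces_by_conj n \<phi> A" using A0 by blast
  have P2: "\<exists>!A. upper_triangular A \<and> induces_by_conj n \<phi> A \<and> col A (n - 1) = unit_vec n (n - 1)"
  proof (rule ex1I[of _ A0])
    show "upper_triangular A0 \<and> induces_by_conj n \<phi> A0 \<and> col A0 (n - 1) = unit_vec n (n - 1)" using A0 by blast
  next
    fix A assume "upper_triangular A \<and> induces_by_conj n \<phi> A \<and> col A (n - 1) = unit_vec n (n - 1)"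
    then show "A = A0" using uniq[OF A0(2), of A] A0(3) n2 by simp
  qed
  have P3: "\<forall>A B. upper_triangular A \<and> induces_by_conj n \<phi> A \<and> col A (n - 1) = unit_vec n (n - 1)
              \<and> induces_by_conj n \<phi> B \<longrightarrow> (\<exists>C. KX_unit n C \<and> B = A * C)"
    using part3 by blast
  show ?thesis using P1 P2 P3 by blast
qed

end
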